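(* Let $\mathbf n=(n_1,\dots,n_r)$ with $r\ge1$ and $n_i\ge1$ for all $i$. If $k\ge\big\lfloor\frac12\sum_{i=1}^r n_i\big\rfloor$, then $\delta_{pr}(k,\mathbf n)\ge\sum_{i=1}^r n_i$.
   Context: $\Delta_m$ denotes the $m$-dimensional simplex; for $\mathbf n=(n_1,\dots,n_r)$, $\Delta_{\mathbf n}:=\Delta_{n_1}\times\dots\times\Delta_{n_r}$. The $k$-skeleton of a polytope is the poset of its faces of dimension at most $k$; two $k$-skeleta are combinatorially equivalent if these posets are isomorphic. A convex polytope is $(k,\mathbf n)$-PSN if its $k$-skeleton is combinatorially equivalent to that of $\Delta_{\mathbf n}$, and $(k,\mathbf n)$-PPSN if in addition it is the image under a linear projection of a polytope combinatorially equivalent to $\Delta_{\mathbf n}$. $\delta_{pr}(k,\mathbf n)$ is the smallest dimension of a $(k,\mathbf n)$-PPSN polytope. *)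

theory Defs
  imports "HOL-Analysis.Analysis"
begin

text \<open>Index set of the standard realization of the product of simplices
  Delta_{n_1} x ... x Delta_{n_r}: pairs (i,j) with i < r and j \<le> n_i.\<close>
definition simplex_index :: "nat list \<Rightarrow> (nat \<times> nat) set" where
  "simplex_index n = {(i, j). i < length n \<and> j \<le> n ! i}"

text \<open>Standard realization of Delta_n inside real^'c, using an injective
  placement e of the index set into the coordinates: the coordinates outside the
  image of e are zero, all others are nonnegative, and for each block i the
  coordinates (i,0),...,(i,n_i) sum to 1.\<close>
definition prod_simplex :: "nat list \<Rightarrow> (nat \<times> nat \<Rightarrow> 'c::finite) \<Rightarrow> (real^'c) set" where
  "prod_simplex n e = {x. (\<forall>c. c \<notin> e ` simplex_index n \<longrightarrow> x $ c = 0)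
      \<and> (\<forall>p\<in>simplex_index n. 0 \<le> x $ (e p))
      \<and> (\<forall>i<length n. (\<Sum>j\<le>n ! i. x $ (e (i, j))) = 1)}"

text \<open>The k-skeleton: faces (including the empty face) of dimension at most k.\<close>
definition skeleton :: "nat \<Rightarrow> 'a::euclidean_space set \<Rightarrow> 'a set set" where
  "skeleton k P = {F. F face_of P \<and> aff_dim F \<le> int k}"

definition poset_iso :: "'a set set \<Rightarrow> 'b set set \<Rightarrow> bool" where
  "poset_iso A B \<longleftrightarrow> (\<exists>f. bij_betw f A B \<and> (\<forall>F\<in>A. \<forall>G\<in>A. F \<subseteq> G \<longleftrightarrow> f F \<subseteq> f G))"

definition skel_equiv :: "nat \<Rightarrow> 'a::euclidean_space set \<Rightarrow> 'b::euclidean_space set \<Rightarrow> bool" where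
  "skel_equiv k P Q \<longleftrightarrow> poset_iso (skeleton k P) (skeleton k Q)"

definition comb_equiv :: "'a::real_vector set \<Rightarrow> 'b::real_vector set \<Rightarrow> bool" where
  "comb_equiv P Q \<longleftrightarrow> poset_iso {F. F face_of P} {F. F face_of Q}"

definition PSN :: "nat \<Rightarrow> nat list \<Rightarrow> 'a::euclidean_space set \<Rightarrow> (nat \<times> nat \<Rightarrow> 'c::finite) \<Rightarrow> bool" where
  "PSN k n P e \<longleftrightarrow> polytope P \<and> inj_on e (simplex_index n) \<and> skel_equiv k P (prod_simplex n e)"

definition PPSN :: "nat \<Rightarrow> nat list \<Rightarrow> 'a::euclidean_space set \<Rightarrow> (nat \<times> nat \<Rightarrow> 'c::finite)
    \<Rightarrow> 'b::euclidean_space set \<Rightarrow> ('b \<Rightarrow> 'a) \<Rightarrow> bool" where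
  "PPSN k n P e Q \<pi> \<longleftrightarrow> PSN k n P e \<and> polytope Q \<and> comb_equiv Q (prod_simplex n e)
      \<and> linear \<pi> \<and> P = \<pi> ` Q"

end

theory Submission
  imports Defs
begin


definition vtx :: "nat list \<Rightarrow> (nat \<times> nat \<Rightarrow> 'c::finite) \<Rightarrow> (nat \<Rightarrow> nat) \<Rightarrow> real^'c" where
  "vtx n e \<sigma> = (\<chi> c. if \<exists>i<length n. c = e (i, \<sigma> i) then 1 else 0)"

definition Fc :: "nat list \<Rightarrow> (nat \<times> nat \<Rightarrow> 'c::finite) \<Rightarrow> (nat \<times> nat) set \<Rightarrow> (real^'c) set" where
  "Fc n e T = {x \<in> prod_simplex n e. \<forall>p\<in>simplex_index n - T. x $ e p = 0}"

definition valid :: "nat list \<Rightarrow> (nat \<Rightarrow> nat) \<Rightarrow> bool" where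
  "valid n \<sigma> \<longleftrightarrow> (\<forall>i<length n. \<sigma> i \<le> n ! i)"

lemma finite_simplex_index: "finite (simplex_index n)"
proof -
  have "simplex_index n \<subseteq> {..<length n} \<times> {..Max (set n)}"
    by (auto simp: simplex_index_def intro: le_trans[OF _ Max_ge] nth_mem)
  then show ?thesis by (rule finite_subset) auto
qed

lemma convex_prod_simplex: "convex (prod_simplex n (e :: nat \<times> nat \<Rightarrow> 'c::finite))"
  unfolding convex_def
proof (intro ballI allI impI)
  fix x y and u v :: real
  assume x: "x \<in> prod_simplex n e" and y: "y \<in> prod_simplex n e" and uv: "0 \<le> u" "0 \<le> v" "u + v = 1"
  show "u *\<^sub>R x + v *\<^sub>R y \<in> prod_simplex n e"
    using x y uv unfolding prod_simplex_def
    by (auto simp: sum.distrib sum_distrib_left[symmetric])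
qed

context
  fixes n :: "nat list" and e :: "nat \<times> nat \<Rightarrow> 'c::finite"
  assumes inj: "inj_on e (simplex_index n)"
begin

lemma Fc_face: "Fc n e T face_of prod_simplex n e"
proof -
  define h :: "real^'c" where "h = (\<Sum>p\<in>simplex_index n - T. axis (e p) 1)"
  have hx: "h \<bullet> x = (\<Sum>p\<in>simplex_index n - T. x $ e p)" for x
  proof -
    have "h \<bullet> x = x \<bullet> h" by (rule inner_commute)
    also have "\<dots> = (\<Sum>p\<in>simplex_index n - T. x \<bullet> axis (e p) 1)" unfolding h_def by (rule inner_sum_right)
    finally show ?thesis by (simp add: cart_eq_inner_axis)
  qed
  have nn: "0 \<le> h \<bullet> x" if "x \<in> prod_simplex n e" for x
    using that unfolding hx prod_simplex_def by (auto intro!: sum_nonneg)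
  have "Fc n e T = prod_simplex n e \<inter> {x. h \<bullet> x = 0}"
  proof -
    have "(\<Sum>p\<in>simplex_index n - T. x $ e p) = 0 \<longleftrightarrow> (\<forall>p\<in>simplex_index n - T. x $ e p = 0)"
      if "x \<in> prod_simplex n e" for x
      using that finite_simplex_index unfolding prod_simplex_def
      by (subst sum_nonneg_eq_0_iff) auto
    then show ?thesis unfolding Fc_def hx by auto
  qed
  then show ?thesis using face_of_Int_supporting_hyperplane_ge[OF convex_prod_simplex nn] by simp
qed


lemma vtx_comp:
  assumes "valid n \<sigma>" "(i, j) \<in> simplex_index n"
  shows "vtx n e \<sigma> $ e (i, j) = (if j = \<sigma> i then 1 else 0)"
proof -
  have "(\<exists>l<length n. e (i, j) = e (l, \<sigma> l)) \<longleftrightarrow> j = \<sigma> i"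
  proof
    assume "\<exists>l<length n. e (i, j) = e (l, \<sigma> l)"
    then obtain l where l: "l < length n" "e (i, j) = e (l, \<sigma> l)" by blast
    have "(l, \<sigma> l) \<in> simplex_index n" using l assms(1) by (auto simp: valid_def simplex_index_def)
    then have "(i, j) = (l, \<sigma> l)" using inj_onD[OF inj l(2) assms(2)] by simp
    then show "j = \<sigma> i" by simp
  next
    assume "j = \<sigma> i" then show "\<exists>l<length n. e (i, j) = e (l, \<sigma> l)"
      using assms(2) by (auto simp: simplex_index_def)
  qed
  then show ?thesis by (simp add: vtx_def)
qed

lemma vtx_out:
  assumes "valid n \<sigma>" "c \<notin> e ` simplex_index n"
  shows "vtx n e \<sigma> $ c = 0"
  using assms by (auto simp: vtx_def valid_def simplex_index_def)

lemma vtx_in: assumes "valid n \<sigma>" shows "vtx n e \<sigma> \<in> prod_simplex n e"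
proof -
  have "(\<Sum>j\<le>n ! i. vtx n e \<sigma> $ e (i, j)) = 1" if "i < length n" for i
  proof -
    have "(\<Sum>j\<le>n ! i. vtx n e \<sigma> $ e (i, j)) = (\<Sum>j\<le>n ! i. if j = \<sigma> i then 1 else 0)"
      using that by (intro sum.cong) (auto simp: vtx_comp[OF assms] simplex_index_def)
    also have "\<dots> = 1" using assms that by (simp add: valid_def)
    finally show ?thesis .
  qed
  moreover have "0 \<le> vtx n e \<sigma> $ c" for c by (simp add: vtx_def)
  ultimately show ?thesis using vtx_out[OF assms] unfolding prod_simplex_def by auto
qed

lemma vtx_Fc: assumes "valid n \<sigma>"
  shows "vtx n e \<sigma> \<in> Fc n e T \<longleftrightarrow> (\<forall>i<length n. (i, \<sigma> i) \<in> T)"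
proof -
  have "(\<forall>p\<in>simplex_index n - T. vtx n e \<sigma> $ e p = 0) \<longleftrightarrow> (\<forall>i<length n. (i, \<sigma> i) \<in> T)"
  proof
    assume h: "\<forall>p\<in>simplex_index n - T. vtx n e \<sigma> $ e p = 0"
    show "\<forall>i<length n. (i, \<sigma> i) \<in> T"
    proof (intro allI impI)
      fix i assume i: "i < length n"
      have "(i, \<sigma> i) \<in> simplex_index n" using i assms by (auto simp: valid_def simplex_index_def)
      then show "(i, \<sigma> i) \<in> T" using h vtx_comp[OF assms, of i "\<sigma> i"] by (metis DiffI zero_neq_one)
    qed
  next
    assume h: "\<forall>i<length n. (i, \<sigma> i) \<in> T"
    show "\<forall>p\<in>simplex_index n - T. vtx n e \<sigma> $ e p = 0"
    proof
      fix p assume p: "p \<in> simplex_index n - T"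
      obtain i j where pij: "p = (i, j)" by force
      have "j \<noteq> \<sigma> i" using h p pij by (auto simp: simplex_index_def)
      then show "vtx n e \<sigma> $ e p = 0" using vtx_comp[OF assms, of i j] p pij by auto
    qed
  qed
  then show ?thesis using vtx_in[OF assms] by (simp add: Fc_def)
qed

lemma Fc_single: assumes "valid n \<sigma>"
  shows "Fc n e {(i, \<sigma> i) | i. i < length n} = {vtx n e \<sigma>}"
proof
  show "{vtx n e \<sigma>} \<subseteq> Fc n e {(i, \<sigma> i) | i. i < length n}"
    using vtx_Fc[OF assms] by auto
next
  show "Fc n e {(i, \<sigma> i) | i. i < length n} \<subseteq> {vtx n e \<sigma>}"
  proof
    fix x assume x: "x \<in> Fc n e {(i, \<sigma> i) | i. i < length n}"
    have xs: "x \<in> prod_simplex n e" using x by (simp add: Fc_def)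
    have z: "x $ e (i, j) = 0" if "(i, j) \<in> simplex_index n" "j \<noteq> \<sigma> i" for i j
      using x that by (auto simp: Fc_def)
    have "x $ c = vtx n e \<sigma> $ c" for c
    proof (cases "c \<in> e ` simplex_index n")
      case False then show ?thesis using xs vtx_out[OF assms] by (simp add: prod_simplex_def)
    next
      case True
      then obtain i j where ij: "(i, j) \<in> simplex_index n" "c = e (i, j)" by force
      show ?thesis
      proof (cases "j = \<sigma> i")
        case False then show ?thesis using ij z vtx_comp[OF assms ij(1)] by simp
      next
        case jt: True
        have i: "i < length n" "\<sigma> i \<le> n ! i" using ij assms by (auto simp: simplex_index_def valid_def)
        have "1 = (\<Sum>j\<le>n ! i. x $ e (i, j))" using xs i by (simp add: prod_simplex_def)
        also have "\<dots> = (\<Sum>j\<le>n ! i. if j = \<sigma> i then x $ e (i, j) else 0)"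
          using i z by (intro sum.cong) (auto simp: simplex_index_def)
        also have "\<dots> = x $ e (i, \<sigma> i)" using i by simp
        finally show ?thesis using vtx_comp[OF assms ij(1)] ij jt by simp
      qed
    qed
    then show "x \<in> {vtx n e \<sigma>}" by (simp add: vec_eq_iff)
  qed
qed

end


definition sig :: "nat \<times> nat \<Rightarrow> nat \<Rightarrow> nat" where
  "sig q = (\<lambda>_. 0)(fst q := snd q)"

definition Jset :: "nat list \<Rightarrow> (nat \<times> nat) set" where
  "Jset n = {(i, j) \<in> simplex_index n. 1 \<le> j}"

definition B0 :: "nat list \<Rightarrow> (nat \<times> nat) set" where
  "B0 n = {(i, 0) | i. i < length n}"

context
  fixes n :: "nat list" and e :: "nat \<times> nat \<Rightarrow> 'c::finite"
  assumes inj: "inj_on e (simplex_index n)"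
begin

lemma valid0: "valid n (\<lambda>_. 0)" by (simp add: valid_def)

lemma valid_sig: "q \<in> Jset n \<Longrightarrow> valid n (sig q)"
  by (auto simp: valid_def sig_def Jset_def simplex_index_def)

lemma Fc_aff_dim:
  assumes X: "X \<subseteq> Jset n"
  shows "aff_dim (Fc n e (B0 n \<union> X)) \<le> int (card X)"
proof -
  define a0 where "a0 = vtx n e (\<lambda>_. 0)"
  define a where "a q = vtx n e (sig q)" for q
  have finX: "finite X" by (rule finite_subset[OF X]) (auto simp: Jset_def intro: finite_subset[OF _ finite_simplex_index])
  have sub: "Fc n e (B0 n \<union> X) \<subseteq> affine hull (insert a0 (a ` X))"
  proof
    fix x assume x: "x \<in> Fc n e (B0 n \<union> X)"
    have xs: "x \<in> prod_simplex n e" using x by (simp add: Fc_def)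
    have z: "x $ e p = 0" if "p \<in> simplex_index n" "p \<notin> B0 n \<union> X" for p
      using x that by (auto simp: Fc_def)
    define y where "y = (\<Sum>q\<in>X. (x $ e q) *\<^sub>R (a q - a0))"
    have y_span: "y \<in> span ((+) (- a0) ` a ` X)"
      unfolding y_def by (intro span_sum span_scale span_base) auto
    have "x - a0 = y"
    proof (subst vec_eq_iff, intro allI)
      fix c
      show "(x - a0) $ c = y $ c"
      proof (cases "c \<in> e ` simplex_index n")
        case False
        then show ?thesis using xs vtx_out[OF inj valid0 False] vtx_out[OF inj valid_sig False] X
          by (auto simp: prod_simplex_def y_def sum_component a_def a0_def intro!: sum.neutral)
      next
        case True
        then obtain i j where ij: "(i, j) \<in> simplex_index n" "c = e (i, j)" by force
        have i: "i < length n" using ij by (simp add: simplex_index_def)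
        have dq: "a q $ e (i, j) - a0 $ e (i, j) = (if q = (i, j) then 1 else 0) - (if j = 0 \<and> fst q = i then 1 else 0)"
          if q: "q \<in> X" for q
        proof -
          obtain i' j' where q': "q = (i', j')" "1 \<le> j'" using q X by (auto simp: Jset_def)
          show ?thesis unfolding a_def a0_def
            using vtx_comp[OF inj valid_sig[OF subsetD[OF X q]] ij(1)] vtx_comp[OF inj valid0 ij(1)] q'
            by (auto simp: sig_def)
        qed
        have ys: "y $ e (i, j) = (\<Sum>q\<in>X. x $ e q * ((if q = (i, j) then 1 else 0) - (if j = 0 \<and> fst q = i then 1 else 0)))"
          unfolding y_def sum_component using dq by (intro sum.cong) auto
        show ?thesis
        proof (cases "j = 0")
          case False
          have "y $ e (i, j) = (\<Sum>q\<in>X. if q = (i, j) then x $ e q else 0)"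
            unfolding ys using False by (intro sum.cong) auto
          also have "\<dots> = (if (i, j) \<in> X then x $ e (i, j) else 0)" using finX by simp
          also have "\<dots> = x $ e (i, j)" using z[OF ij(1)] False by (auto simp: B0_def)
          finally show ?thesis using vtx_comp[OF inj valid0 ij(1)] False ij(2) by (simp add: a0_def)
        next
          case True
          have "(0::nat, 0::nat) \<notin> {}" by simp
          have "y $ e (i, j) = - (\<Sum>q\<in>X. if fst q = i then x $ e q else 0)"
            unfolding ys using True X by (auto simp: Jset_def sum_negf[symmetric] intro!: sum.cong)
          also have "(\<Sum>q\<in>X. if fst q = i then x $ e q else 0) = (\<Sum>q\<in>X \<inter> {q. fst q = i}. x $ e q)"
            using finX by (simp add: sum.inter_restrict)
          also have "X \<inter> {q. fst q = i} = Pair i ` {j. (i, j) \<in> X}" by force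
          also have "(\<Sum>q\<in>Pair i ` {j. (i, j) \<in> X}. x $ e q) = (\<Sum>j\<in>{j. (i, j) \<in> X}. x $ e (i, j))"
            by (subst sum.reindex) (auto simp: inj_on_def)
          also have "{j. (i, j) \<in> X} = {1..n ! i} \<inter> {j. (i, j) \<in> X}"
            using X by (auto simp: Jset_def simplex_index_def)
          also have "(\<Sum>j\<in>{1..n ! i} \<inter> {j. (i, j) \<in> X}. x $ e (i, j)) = (\<Sum>j\<in>{1..n ! i}. if (i, j) \<in> X then x $ e (i, j) else 0)"
            by (simp add: sum.inter_restrict)
          also have "\<dots> = (\<Sum>j\<in>{1..n ! i}. x $ e (i, j))"
            using z i by (intro sum.cong) (auto simp: simplex_index_def B0_def)
          also have "\<dots> = 1 - x $ e (i, 0)"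
          proof -
            have "{..n ! i} = insert 0 {1..n ! i}" by auto
            then have "(\<Sum>j\<le>n ! i. x $ e (i, j)) = x $ e (i, 0) + (\<Sum>j\<in>{1..n ! i}. x $ e (i, j))" by simp
            moreover have "(\<Sum>j\<le>n ! i. x $ e (i, j)) = 1" using xs i by (simp add: prod_simplex_def)
            ultimately show ?thesis by simp
          qed
          finally show ?thesis using vtx_comp[OF inj valid0 ij(1)] True ij(2) by (simp add: a0_def)
        qed
      qed
    qed
    then have "x = a0 + y" by (simp add: algebra_simps)
    then show "x \<in> affine hull (insert a0 (a ` X))"
      unfolding affine_hull_insert_span_gen using y_span by blast
  qed
  have "aff_dim (Fc n e (B0 n \<union> X)) \<le> aff_dim (insert a0 (a ` X))"
    using aff_dim_subset[OF sub] by (simp add: aff_dim_affine_hull)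
  also have "\<dots> \<le> int (card (insert a0 (a ` X))) - 1" using finX by (intro aff_dim_le_card) simp
  also have "\<dots> \<le> int (card X)"
  proof -
    have "card (insert a0 (a ` X)) \<le> Suc (card (a ` X))" using finX by (simp add: card_insert_if)
    then show ?thesis using card_image_le[OF finX, of a] by linarith
  qed
  finally show ?thesis .
qed

end


definition sgo :: "(nat \<times> nat) option \<Rightarrow> nat \<Rightarrow> nat" where
  "sgo u = (case u of None \<Rightarrow> (\<lambda>_. 0) | Some q \<Rightarrow> sig q)"

lemma card_Jset: "card (Jset n) = sum_list n"
proof -
  have "Jset n = Sigma {..<length n} (\<lambda>i. {1..n ! i})"
    by (auto simp: Jset_def simplex_index_def)
  then have "card (Jset n) = (\<Sum>i<length n. card {1..n ! i})" by (simp add: card_SigmaI)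
  also have "\<dots> = (\<Sum>i<length n. n ! i)" by simp
  also have "\<dots> = sum_list n" by (simp add: sum_list_sum_nth atLeast0LessThan)
  finally show ?thesis .
qed

lemma finite_Jset: "finite (Jset n)"
  by (rule finite_subset[OF _ finite_simplex_index]) (auto simp: Jset_def)

theorem theorem4p7:
  fixes n :: "nat list" and k :: nat
    and P :: "'a::euclidean_space set" and e :: "nat \<times> nat \<Rightarrow> 'c::finite"
    and Q :: "'b::euclidean_space set" and \<pi> :: "'b \<Rightarrow> 'a"
  assumes "n \<noteq> []"
    and "\<forall>i\<in>set n. 1 \<le> i"
    and "sum_list n div 2 \<le> k"
    and "PPSN k n P e Q \<pi>"
  shows "int (sum_list n) \<le> aff_dim P"
proof (rule ccontr)
  assume small: "\<not> int (sum_list n) \<le> aff_dim P"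
  define D where "D = prod_simplex n e"
  have polyP: "polytope P" and inj: "inj_on e (simplex_index n)" and iso: "poset_iso (skeleton k P) (skeleton k D)"
    using assms(4) unfolding PPSN_def PSN_def skel_equiv_def D_def by blast+
  obtain f where fprop: "bij_betw f (skeleton k P) (skeleton k D) \<and>
      (\<forall>F\<in>skeleton k P. \<forall>G\<in>skeleton k P. F \<subseteq> G \<longleftrightarrow> f F \<subseteq> f G)"
    using iso unfolding poset_iso_def by (rule exE)
  have bij: "bij_betw f (skeleton k P) (skeleton k D)" using fprop by (rule conjunct1)
  have ord: "F \<subseteq> G \<longleftrightarrow> f F \<subseteq> f G" if "F \<in> skeleton k P" "G \<in> skeleton k P" for F G
    using bspec[OF bspec[OF conjunct2[OF fprop] that(1)] that(2)] .
  have surj: "f ` skeleton k P = skeleton k D" using bij by (rule bij_betw_imp_surj_on)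
  have injf: "inj_on f (skeleton k P)" using bij by (rule bij_betw_imp_inj_on)
  have emP: "{} \<in> skeleton k P" by (simp add: skeleton_def)
  have emD: "{} \<in> skeleton k D" by (simp add: skeleton_def)
  have f0: "f {} = {}"
  proof -
    have "{} \<in> f ` skeleton k P" using emD surj by simp
    then obtain G where G: "G \<in> skeleton k P" "f G = {}" by (metis imageE)
    show ?thesis using ord[OF emP G(1)] G by auto
  qed
  have cP: "convex P" "compact P" using polyP by (auto simp: polytope_imp_convex polytope_imp_compact)
  have ex: "\<exists>p. {p} \<in> skeleton k P \<and> f {p} = {vtx n e \<sigma>}" if \<sigma>: "valid n \<sigma>" for \<sigma>
  proof -
    have "{vtx n e \<sigma>} \<in> skeleton k D"
      using Fc_face[OF inj, of "{(i, \<sigma> i) |i. i < length n}"] Fc_single[OF inj \<sigma>] by (simp add: skeleton_def D_def)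
    then have "{vtx n e \<sigma>} \<in> f ` skeleton k P" using surj by simp
    then obtain G where G: "G \<in> skeleton k P" "f G = {vtx n e \<sigma>}" by (metis imageE)
    have Gf: "G face_of P" using G by (simp add: skeleton_def)
    have "G \<noteq> {}" using G f0 by auto
    then obtain p where p: "p extreme_point_of G"
      using extreme_point_exists_convex[of G] face_of_imp_compact[OF cP Gf] face_of_imp_convex[OF Gf] by blast
    have "{p} face_of G" using p by (simp add: face_of_singleton)
    then have "{p} face_of P" using face_of_trans Gf by blast
    then have pS: "{p} \<in> skeleton k P" by (simp add: skeleton_def)
    have "p \<in> G" using p by (simp add: extreme_point_of_def)
    then have "f {p} \<subseteq> {vtx n e \<sigma>}" using ord[OF pS G(1)] G by auto
    moreover have "f {p} \<noteq> {}" using injf pS emP f0 by (metis inj_on_eq_iff insert_not_empty)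
    ultimately show ?thesis using pS by blast
  qed
  define pt where "pt u = (SOME p. {p} \<in> skeleton k P \<and> f {p} = {vtx n e (sgo u)})" for u
  define Ix where "Ix = insert None (Some ` Jset n)"
  have validI: "valid n (sgo u)" if "u \<in> Ix" for u
    using that valid0[OF inj] valid_sig[OF inj] by (auto simp: Ix_def sgo_def)
  have ptS: "{pt u} \<in> skeleton k P" "f {pt u} = {vtx n e (sgo u)}" if "u \<in> Ix" for u
    using someI_ex[OF ex[OF validI[OF that]]] by (auto simp: pt_def)
  have ptP: "pt u \<in> P" if "u \<in> Ix" for u
    using ptS(1)[OF that] by (auto simp: skeleton_def dest: face_of_imp_subset)
  have mem: "pt u \<in> G \<longleftrightarrow> vtx n e (sgo u) \<in> f G" if "u \<in> Ix" "G \<in> skeleton k P" for u G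
    using ord[OF ptS(1)[OF that(1)] that(2)] ptS(2)[OF that(1)] by auto
  have inj_pt: "inj_on pt Ix"
  proof
    fix u w assume u: "u \<in> Ix" and w: "w \<in> Ix" and eq: "pt u = pt w"
    have "vtx n e (sgo u) = vtx n e (sgo w)" using ptS(2)[OF u] ptS(2)[OF w] eq by simp
    then have s: "sgo u i = sgo w i" if "i < length n" for i
    proof -
      have si: "(i, sgo u i) \<in> simplex_index n" "(i, sgo w i) \<in> simplex_index n"
        using validI[OF u] validI[OF w] that by (auto simp: valid_def simplex_index_def)
      show ?thesis using vtx_comp[OF inj validI[OF u] si(1)] vtx_comp[OF inj validI[OF w] si(1)]
        \<open>vtx n e (sgo u) = vtx n e (sgo w)\<close> by (auto split: if_splits)
    qed
    show "u = w"
    proof (cases u; cases w)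
      fix q assume "u = None" "w = Some q"
      then show ?thesis using s[of "fst q"] w by (auto simp: Ix_def Jset_def sgo_def sig_def simplex_index_def)
    next
      fix q assume "u = Some q" "w = None"
      then show ?thesis using s[of "fst q"] u by (auto simp: Ix_def Jset_def sgo_def sig_def simplex_index_def)
    next
      fix q q' assume uq: "u = Some q" "w = Some q'"
      then have "fst q < length n" "fst q' < length n" "1 \<le> snd q" "1 \<le> snd q'" using u w
        by (auto simp: Ix_def Jset_def simplex_index_def)
      then show ?thesis using s[of "fst q"] s[of "fst q'"] uq
        by (cases q; cases q') (auto simp: sgo_def sig_def split: if_splits)
    qed (simp)
  qed

  define S where "S = pt ` Ix"
  have finIx: "finite Ix" using finite_Jset by (simp add: Ix_def)
  have cardIx: "card Ix = Suc (sum_list n)"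
    using finite_Jset card_Jset by (simp add: Ix_def card_image)
  have finS: "finite S" using finIx by (simp add: S_def)
  have cardS: "card S = Suc (sum_list n)" using card_image[OF inj_pt] cardIx by (simp add: S_def)
  have SP: "S \<subseteq> P" using ptP by (auto simp: S_def)
  have "affine_dependent S"
  proof (rule ccontr)
    assume "\<not> affine_dependent S"
    then have "int (card S) = aff_dim S + 1" by (rule aff_dim_affine_independent)
    moreover have "aff_dim S \<le> aff_dim P" using SP by (rule aff_dim_subset)
    ultimately show False using small cardS by simp
  qed
  then obtain U where U1: "sum U S = 0" and U2: "\<exists>v\<in>S. U v \<noteq> 0" and U3: "(\<Sum>v\<in>S. U v *\<^sub>R v) = 0"
    using affine_dependent_explicit_finite[OF finS] by blast
  define c0 where "c0 u = U (pt u)" for u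
  have c1: "sum c0 Ix = 0" using U1 sum.reindex[OF inj_pt, of U] by (simp add: S_def c0_def o_def)
  have c2: "\<exists>u\<in>Ix. c0 u \<noteq> 0" using U2 by (auto simp: S_def c0_def)
  have c3: "(\<Sum>u\<in>Ix. c0 u *\<^sub>R pt u) = 0" using U3 sum.reindex[OF inj_pt, of "\<lambda>v. U v *\<^sub>R v"]
    by (simp add: S_def c0_def o_def)
  have key: False if
    h1: "sum c Ix = 0" and h2: "\<exists>u\<in>Ix. c u \<noteq> 0" and h3: "(\<Sum>u\<in>Ix. c u *\<^sub>R pt u) = 0"
    and h4: "card {q\<in>Jset n. c (Some q) > 0} \<le> card {q\<in>Jset n. c (Some q) < 0}" for c
  proof -
    define X where "X = {q\<in>Jset n. c (Some q) > 0}"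
    define Y where "Y = {q\<in>Jset n. c (Some q) < 0}"
    have finXY: "finite X" "finite Y" using finite_Jset by (auto simp: X_def Y_def)
    have XJ: "X \<subseteq> Jset n" by (auto simp: X_def)
    have Yne: "Y \<noteq> {}"
    proof
      assume Y0: "Y = {}"
      have "card X \<le> card Y" using h4 by (simp add: X_def Y_def)
      then have "card X = 0" using Y0 by simp
      then have "X = {}" using finXY(1) by simp
      then have cz: "c (Some q) = 0" if "q \<in> Jset n" for q
      proof -
        have "q \<notin> X" "q \<notin> Y" using \<open>X = {}\<close> Y0 by auto
        then show ?thesis using that by (simp add: X_def Y_def)
      qed
      have "sum c Ix = c None + sum c (Some ` Jset n)" using finite_Jset by (simp add: Ix_def)
      also have "sum c (Some ` Jset n) = 0" using cz by (auto intro!: sum.neutral)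
      finally have "c None = 0" using h1 by simp
      then show False using h2 cz by (auto simp: Ix_def)
    qed
    have "card X + card Y \<le> card (Jset n)"
    proof -
      have "card X + card Y = card (X \<union> Y)" using finXY by (subst card_Un_disjoint) (auto simp: X_def Y_def)
      also have "\<dots> \<le> card (Jset n)" using finite_Jset by (intro card_mono) (auto simp: X_def Y_def)
      finally show ?thesis .
    qed
    then have "card X \<le> k" using h4 assms(3) card_Jset[of n] by (simp add: X_def Y_def)
    define F where "F = Fc n e (B0 n \<union> X)"
    have "F \<in> skeleton k D"
      using Fc_face[OF inj] Fc_aff_dim[OF inj XJ] \<open>card X \<le> k\<close>
      by (auto simp: skeleton_def D_def F_def)
    then have "F \<in> f ` skeleton k P" using surj by simp
    then obtain G where G: "G \<in> skeleton k P" "f G = F" by (metis imageE)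
    have "G face_of P" using G by (simp add: skeleton_def)
    then have "G exposed_face_of P" using exposed_face_of_polyhedron[OF polytope_imp_polyhedron[OF polyP]] by simp
    then obtain h b where hb: "P \<subseteq> {x. h \<bullet> x \<le> b}" "G = P \<inter> {x. h \<bullet> x = b}"
      unfolding exposed_face_of_def by blast
    have inG: "pt u \<in> G \<longleftrightarrow> (\<forall>i<length n. (i, sgo u i) \<in> B0 n \<union> X)" if "u \<in> Ix" for u
      using mem[OF that G(1)] G(2) vtx_Fc[OF inj validI[OF that]] by (simp add: F_def)
    define t where "t u = c u * (h \<bullet> pt u - b)" for u
    have "(\<Sum>u\<in>Ix. t u) = h \<bullet> (\<Sum>u\<in>Ix. c u *\<^sub>R pt u) - b * sum c Ix"
      by (simp add: t_def inner_sum_right sum_subtractf sum_distrib_left algebra_simps)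
    then have tz: "(\<Sum>u\<in>Ix. t u) = 0" using h1 h3 by simp
    have tnn: "0 \<le> t u" if u: "u \<in> Ix" for u
    proof (cases "c u = 0")
      case False
      show ?thesis
      proof (cases "pt u \<in> G")
        case True then show ?thesis using hb by (simp add: t_def)
      next
        case notG: False
        have le: "h \<bullet> pt u < b" using notG hb ptP[OF u] by force
        have "c u < 0"
        proof (rule ccontr)
          assume "\<not> c u < 0"
          then have cp: "c u > 0" using False by simp
          show False
          proof (cases u)
            case None
            then show False using notG inG[OF u] by (simp add: sgo_def B0_def)
          next
            case (Some q)
            then have q: "q \<in> X" using u cp by (auto simp: X_def Ix_def)
            have "(\<forall>i<length n. (i, sgo u i) \<in> B0 n \<union> X)"
              using q Some by (cases q) (auto simp: sgo_def sig_def B0_def)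
            then show False using notG inG[OF u] by simp
          qed
        qed
        then show ?thesis using le by (simp add: t_def mult_nonpos_nonpos)
      qed
    qed (simp add: t_def)
    obtain q where qY: "q \<in> Y" using Yne by blast
    have uq: "Some q \<in> Ix" using qY by (auto simp: Ix_def Y_def)
    have "pt (Some q) \<notin> G"
    proof
      assume "pt (Some q) \<in> G"
      then have "(fst q, sgo (Some q) (fst q)) \<in> B0 n \<union> X" using inG[OF uq] qY
        by (auto simp: Y_def Jset_def simplex_index_def)
      then show False using qY by (cases q) (auto simp: sgo_def sig_def B0_def X_def Y_def Jset_def)
    qed
    then have "h \<bullet> pt (Some q) < b" using hb ptP[OF uq] by force
    then have "0 < t (Some q)" using qY by (simp add: t_def Y_def mult_neg_neg)
    then have "0 < (\<Sum>u\<in>Ix. t u)" using finIx uq tnn by (intro sum_pos2) auto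
    then show False using tz by simp
  qed
  show False
  proof (cases "card {q\<in>Jset n. c0 (Some q) > 0} \<le> card {q\<in>Jset n. c0 (Some q) < 0}")
    case True then show False using key[OF c1 c2 c3] by blast
  next
    case False
    show False
    proof (rule key[of "\<lambda>u. - c0 u"])
      show "sum (\<lambda>u. - c0 u) Ix = 0" using c1 by (simp add: sum_negf)
      show "\<exists>u\<in>Ix. - c0 u \<noteq> 0" using c2 by simp
      show "(\<Sum>u\<in>Ix. - c0 u *\<^sub>R pt u) = 0" using c3 by (simp add: sum_negf)
      show "card {q\<in>Jset n. - c0 (Some q) > 0} \<le> card {q\<in>Jset n. - c0 (Some q) < 0}" using False by simp
    qed
  qed
qed
end
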